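(* The composition $\mathcal F\circ\mathcal I$ is the identity map on $\mathcal F_\mathbb Z$.
   Context: Let $S_\mathbb Z$ be the group of finitely supported permutations of $\mathbb Z$. Let $\mathcal I_\mathbb Z=\{w\in S_\mathbb Z:w=w^{-1}\}$. Let $\Theta(i)=i-(-1)^i$ and $\mathcal F_\mathbb Z=\{w^{-1}\Theta w:w\in S_\mathbb Z\}$. For $y\in\mathcal I_\mathbb Z$, choose any even integer $m$ smaller than every element of $\mathrm{supp}(y)=\{i:y(i)\ne i\}$. Let $\phi:\mathbb Z\to\mathbb Z\setminus\mathrm{supp}(y)$ be the order-preserving bijection with $\phi(0)=m$. Define $\mathcal F(y)$ to be the unique element of $\mathcal F_\mathbb Z$ with $\mathcal F(y)(i)=y(i)$ for $i\in\mathrm{supp}(y)$ and $\mathcal F(y)\circ\phi=\phi\circ\Theta$. For $z\in\mathcal F_\mathbb Z$, let $\mathcal I(z)\in\mathcal I_\mathbb Z$ be the involution whose nontrivial cycles are exactly the cycles $(p,q)$ of $z$ with $p<q$ for which some cycle $(a,b)$ of $z$ with $a<b$ satisfies $p<b<q$. *)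

theory Defs
  imports Main
begin

definition supp :: "(int \<Rightarrow> int) \<Rightarrow> int set" where
  "supp w = {i. w i \<noteq> i}"

definition SZ :: "(int \<Rightarrow> int) set" where
  "SZ = {w. bij w \<and> finite (supp w)}"

definition IZ :: "(int \<Rightarrow> int) set" where
  "IZ = {w \<in> SZ. w \<circ> w = id}"

definition Theta :: "int \<Rightarrow> int" where
  "Theta i = i - (-1) ^ nat \<bar>i\<bar>"

definition FZ :: "(int \<Rightarrow> int) set" where
  "FZ = {inv w \<circ> Theta \<circ> w | w. w \<in> SZ}"

definition Fmap :: "(int \<Rightarrow> int) \<Rightarrow> (int \<Rightarrow> int)" where
  "Fmap y = (THE z. z \<in> FZ \<and> (\<forall>i \<in> supp y. z i = y i) \<and>
     (\<exists>m phi. even m \<and> (\<forall>i \<in> supp y. m < i) \<and>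
        strict_mono phi \<and> bij_betw phi UNIV (- supp y) \<and> phi 0 = m \<and>
        z \<circ> phi = phi \<circ> Theta))"

text \<open>The map I from F_Z to I_Z: keep exactly the cycles (p,q), p<q, of z for which
  some cycle (a,b), a<b, of z has p<b<q; all other points are fixed.\<close>
definition Imap :: "(int \<Rightarrow> int) \<Rightarrow> (int \<Rightarrow> int)" where
  "Imap z = (\<lambda>i. if i \<noteq> z i \<and> (\<exists>a b. a < b \<and> z a = b \<and> z b = a \<and>
                     min i (z i) < b \<and> b < max i (z i)) then z i else i)"

end

theory Submission imports Defs begin

lemma Theta_simp: "Theta i = (if even i then i - 1 else i + 1)"
  unfolding Theta_def by (auto simp: even_nat_iff)

lemma Theta_Theta[simp]: "Theta (Theta i) = i"
  by (simp add: Theta_simp)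

lemma Theta_shift: "even m \<Longrightarrow> Theta (m + t) = m + Theta t"
  by (simp add: Theta_simp)

lemma lb: "finite (A::int set) \<Longrightarrow> \<exists>L. \<forall>x\<in>A. L < x"
proof (induction A rule: finite_induct)
  case (insert x F) then obtain L where "\<forall>y\<in>F. L < y" by blast
  then show ?case by (intro exI[of _ "min L (x - 1)"]) auto
qed auto

definition kept :: "(int \<Rightarrow> int) \<Rightarrow> int \<Rightarrow> bool" where
  "kept z i = (\<exists>a b. a < b \<and> z a = b \<and> z b = a \<and> min i (z i) < b \<and> b < max i (z i))"

lemma FZ_props:
  assumes "z \<in> FZ"
  shows "\<forall>i. z (z i) = i" "\<forall>i. z i \<noteq> i" "finite {i. z i \<noteq> Theta i}"
proof -
  obtain w where w: "bij w" "finite (supp w)" and z: "z = inv w \<circ> Theta \<circ> w"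
    using assms unfolding FZ_def SZ_def by auto
  have iw: "\<And>x. inv w (w x) = x" "\<And>x. w (inv w x) = x"
    using w(1) by (auto simp: bij_def surj_f_inv_f)
  show "\<forall>i. z (z i) = i" by (simp add: z iw)
  show "\<forall>i. z i \<noteq> i"
  proof
    fix i show "z i \<noteq> i"
    proof
      assume "z i = i"
      then have "w (z i) = w i" by simp
      then have "Theta (w i) = w i" by (simp add: z iw)
      then show False by (simp add: Theta_simp split: if_splits)
    qed
  qed
  have "{i. z i \<noteq> Theta i} \<subseteq> supp w \<union> Theta ` supp w"
  proof
    fix i assume "i \<in> {i. z i \<noteq> Theta i}"
    then have ne: "z i \<noteq> Theta i" by simp
    show "i \<in> supp w \<union> Theta ` supp w"
    proof (rule ccontr)
      assume "i \<notin> supp w \<union> Theta ` supp w"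
      then have a: "w i = i" unfolding supp_def by auto
      have b: "w (Theta i) = Theta i"
      proof (rule ccontr)
        assume "w (Theta i) \<noteq> Theta i"
        then have "i \<in> Theta ` supp w" by (intro image_eqI[of _ _ "Theta i"]) (auto simp: supp_def)
        then show False using \<open>i \<notin> supp w \<union> Theta ` supp w\<close> by simp
      qed
      have "inv w (Theta i) = Theta i" using b iw by metis
      then have "z i = Theta i" by (simp add: z a)
      with ne show False by simp
    qed
  qed
  then show "finite {i. z i \<noteq> Theta i}" using w(2) finite_subset by blast
qed

context
  fixes z :: "int \<Rightarrow> int"
  assumes zz: "\<And>i. z (z i) = i" and nofix: "\<And>i. z i \<noteq> i"
begin

lemma kept_sym: "kept z (z i) = kept z i"
  unfolding kept_def by (simp add: zz min.commute max.commute)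

lemma between0:
  assumes "z p = q" "p < q" "\<not> kept z p" "p < x" "x < q"
  shows "kept z x"
proof (cases "max x (z x) < q")
  case True
  have "z q = p" using assms(1) zz by metis
  have "x \<noteq> z x" using nofix by metis
  have "kept z p"
    unfolding kept_def
    apply (rule exI[of _ "min x (z x)"], rule exI[of _ "max x (z x)"])
    using True assms \<open>x \<noteq> z x\<close> zz by (auto simp: min_def max_def)
  with assms(3) show ?thesis by simp
next
  case False
  have "z q = p" using assms(1) zz by metis
  have "z x \<noteq> q" using \<open>z q = p\<close> zz assms(4) by (metis less_irrefl)
  then have "z x > q" using False assms(5) by (auto simp: max_def split: if_splits)
  then have "min x (z x) = x" "max x (z x) = z x" using assms(5) by auto
  then have "p < q \<and> z p = q \<and> z q = p \<and> min x (z x) < q \<and> q < max x (z x)"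
    using assms \<open>z q = p\<close> \<open>z x > q\<close> by linarith
  then show ?thesis unfolding kept_def by blast
qed

lemma between:
  assumes "\<not> kept z j" "min j (z j) < x" "x < max j (z j)"
  shows "kept z x"
proof (cases "j < z j")
  case True then show ?thesis using between0[of j "z j" x] assms by (simp add: min_def max_def)
next
  case False
  then have "z j < j" using nofix[of j] by simp
  moreover have "\<not> kept z (z j)" using assms(1) kept_sym by simp
  ultimately show ?thesis using between0[of "z j" j x] assms zz by (simp add: min_def max_def)
qed

lemma kept_noTheta: "kept z i \<Longrightarrow> z i \<noteq> Theta i"
  unfolding kept_def Theta_simp by (auto simp: min_def max_def split: if_splits)

lemma Imap_eq: "Imap z = (\<lambda>i. if kept z i then z i else i)"
  unfolding Imap_def kept_def using nofix by (auto intro!: ext)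

lemma supp_Imap: "supp (Imap z) = {i. kept z i}"
  unfolding supp_def Imap_eq using nofix by auto

lemma key:
  assumes finD: "finite {i. z i \<noteq> Theta i}"
    and m: "even m" "\<forall>i. kept z i \<longrightarrow> m < i"
    and phi: "strict_mono phi" "bij_betw phi UNIV (- {i. kept z i})" "phi 0 = m"
  shows "z (phi t) = phi (Theta t)"
proof -
  let ?K = "{i. kept z i}"
  have rng: "\<And>x. \<not> kept z x \<Longrightarrow> \<exists>s. phi s = x"
    using phi(2) unfolding bij_betw_def by (metis ComplI UNIV_I imageE mem_Collect_eq)
  have inK: "\<And>t. \<not> kept z (phi t)"
    using phi(2) unfolding bij_betw_def by auto
  have S1: "phi (- int n) = m - int n" for n
  proof (induction n)
    case 0 then show ?case using phi(3) by simp
  next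
    case (Suc n)
    have "m - int n - 1 < m" by simp
    then have "\<not> kept z (m - int n - 1)" using m(2) less_asym by blast
    then obtain s where s: "phi s = m - int n - 1" using rng by blast
    have "phi s < phi (- int n)" using s Suc by simp
    then have "s < - int n" using strict_mono_less[OF phi(1)] by blast
    then have "phi s \<le> phi (- int (Suc n))" using phi(1)
      by (simp add: strict_mono_less_eq)
    moreover have "phi (- int (Suc n)) < phi (- int n)" using phi(1) by (simp add: strict_mono_less)
    ultimately show ?case using s Suc by simp
  qed
  have S1': "t \<le> 0 \<Longrightarrow> phi t = m + t" for t
    using S1[of "nat (-t)"] by simp
  have S2: "\<exists>s. z (phi t) = phi s \<and> (s = t - 1 \<or> s = t + 1)" for t
  proof -
    have "\<not> kept z (z (phi t))" using inK kept_sym by simp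
    then obtain s where s: "phi s = z (phi t)" using rng by blast
    have "s \<noteq> t" using s nofix by metis
    moreover have "\<not> s \<ge> t + 2"
    proof
      assume "s \<ge> t + 2"
      then have "phi t < phi (t+1)" "phi (t+1) < phi s" using phi(1) by (auto simp: strict_mono_less)
      then have "kept z (phi (t+1))" using between[of "phi t" "phi (t+1)"] inK s by simp
      then show False using inK by simp
    qed
    moreover have "\<not> s \<le> t - 2"
    proof
      assume "s \<le> t - 2"
      then have "phi (t - 1) < phi t" "phi s < phi (t - 1)" using phi(1) by (auto simp: strict_mono_less)
      then have "kept z (phi (t - 1))" using between[of "phi t" "phi (t - 1)"] inK s by simp
      then show False using inK by simp
    qed
    ultimately show ?thesis using s by (intro exI[of _ s]) auto
  qed
  obtain L where L: "\<forall>x\<in>{i. z i \<noteq> Theta i}. L < x" using lb[OF finD] by blast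
  define T0 where "T0 = min (-2) (L - m - 2)"
  have S3: "t \<le> T0 \<Longrightarrow> z (phi t) = phi (Theta t)" for t
  proof -
    assume t: "t \<le> T0"
    have "Theta t \<le> 0" using t unfolding T0_def Theta_simp by auto
    then have "phi (Theta t) = m + Theta t" using S1' by simp
    moreover have "phi t = m + t" using S1' t unfolding T0_def by simp
    moreover have "m + t < L" using t unfolding T0_def by simp
    then have "z (m + t) = Theta (m + t)" using L less_asym by blast
    ultimately show ?thesis using Theta_shift[OF m(1)] by simp
  qed
  define k0 where "k0 = T0 div 2"
  have ind: "\<forall>k. k \<ge> k0 \<longrightarrow> z (phi (2*k)) = phi (2*k - 1) \<and> z (phi (2*k - 1)) = phi (2*k)"
  proof (intro allI impI)
    fix k assume "k \<ge> k0"
    then show "z (phi (2*k)) = phi (2*k - 1) \<and> z (phi (2*k - 1)) = phi (2*k)"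
    proof (induction k rule: int_ge_induct)
      case base
      have "2 * k0 \<le> T0" "2*k0 - 1 \<le> T0" unfolding k0_def by auto
      then show ?case using S3[of "2*k0"] S3[of "2*k0-1"] by (simp_all add: Theta_simp)
    next
      case (step k)
      obtain s where s: "z (phi (2*k+1)) = phi s" "s = 2*k \<or> s = 2*k+2"
        using S2[of "2*k+1"] by auto
      have "s \<noteq> 2*k"
      proof
        assume "s = 2*k"
        then have "phi (2*k+1) = z (phi (2*k))" using s zz by metis
        also have "\<dots> = phi (2*k - 1)" using step by simp
        finally have "phi (2*k+1) = phi (2*k - 1)" .
        then have "2*k+1 = 2*k - 1" using strict_mono_eq[OF phi(1)] by blast
        then show False by simp
      qed
      then have a: "z (phi (2*k+1)) = phi (2*k+2)" using s by auto
      then have b: "z (phi (2*k+2)) = phi (2*k+1)" using zz by metis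
      show ?case using a b by (simp add: algebra_simps)
    qed
  qed
  show ?thesis
  proof (cases "t \<le> T0")
    case True then show ?thesis using S3 by simp
  next
    case False
    define k where "k = (t + 1) div 2"
    have "k \<ge> k0" using False unfolding k_def k0_def by linarith
    moreover have "t = 2*k \<or> t = 2*k - 1" unfolding k_def by presburger
    ultimately show ?thesis using ind by (auto simp: Theta_simp)
  qed
qed

end

lemma phi_exists:
  fixes K :: "int set"
  assumes "finite K" "\<forall>i\<in>K. m < i"
  shows "\<exists>phi :: int \<Rightarrow> int. strict_mono phi \<and> bij_betw phi UNIV (- K) \<and> phi 0 = m"
  using assms
proof (induction K rule: finite_induct)
  case empty
  have "bij_betw (\<lambda>t. m + t) UNIV (UNIV::int set)"
    by (rule bij_betw_byWitness[where f'="\<lambda>t. t - m"]) auto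
  moreover have "strict_mono (\<lambda>t. m + t)" by (auto simp: strict_mono_def)
  ultimately show ?case by (intro exI[of _ "\<lambda>t. m + t"]) simp
next
  case (insert k F)
  then obtain phi :: "int \<Rightarrow> int" where phi: "strict_mono phi" "bij_betw phi UNIV (- F)" "phi 0 = m" by auto
  have "k \<in> - F" using insert by simp
  then obtain s where s: "phi s = k" using phi(2) unfolding bij_betw_def by (metis imageE)
  have "0 < s" using s phi insert(4) by (metis insertI1 strict_mono_less)
  define phi' where "phi' t = (if t < s then phi t else phi (t+1))" for t
  have sm: "strict_mono phi'"
    unfolding strict_mono_def phi'_def using phi(1) by (auto simp: strict_mono_less)
  have img: "range phi' = - insert k F"
  proof
    show "range phi' \<subseteq> - insert k F"
    proof
      fix x assume "x \<in> range phi'"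
      then obtain t where t: "x = phi' t" by auto
      have "x \<in> - F" using t phi(2) unfolding phi'_def bij_betw_def by auto
      moreover have "x \<noteq> k" using t s phi(1) unfolding phi'_def
        by (auto simp: strict_mono_eq)
      ultimately show "x \<in> - insert k F" by simp
    qed
  next
    show "- insert k F \<subseteq> range phi'"
    proof
      fix x assume x: "x \<in> - insert k F"
      then obtain u where u: "phi u = x" using phi(2) unfolding bij_betw_def by (metis ComplI imageE insert_iff ComplD)
      have "u \<noteq> s" using u s x by auto
      show "x \<in> range phi'"
      proof (cases "u < s")
        case True then show ?thesis using u unfolding phi'_def by (intro range_eqI[of _ _ u]) auto
      next
        case False then show ?thesis using u \<open>u \<noteq> s\<close> unfolding phi'_def
          by (intro range_eqI[of _ _ "u - 1"]) auto
      qed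
    qed
  qed
  have "bij_betw phi' UNIV (- insert k F)"
    unfolding bij_betw_def using img sm strict_mono_imp_inj_on by blast
  moreover have "phi' 0 = m" using \<open>0 < s\<close> phi(3) unfolding phi'_def by simp
  ultimately show ?case using sm by blast
qed

theorem proposition3p7:
  shows "\<forall>z \<in> FZ. Imap z \<in> IZ \<and> Fmap (Imap z) = z"
proof
  fix z assume zF: "z \<in> FZ"
  note P = FZ_props[OF zF]
  have zz: "\<And>i. z (z i) = i" and nofix: "\<And>i. z i \<noteq> i" using P by auto
  let ?K = "{i. kept z i}"
  have finK: "finite ?K"
    by (rule finite_subset[OF _ P(3)]) (use kept_noTheta[OF zz nofix] in auto)
  have yeq: "Imap z = (\<lambda>i. if kept z i then z i else i)" using Imap_eq[OF zz nofix] .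
  have suppy: "supp (Imap z) = ?K" using supp_Imap[OF zz nofix] .
  have inv: "Imap z \<circ> Imap z = id"
    by (auto simp: yeq zz kept_sym[OF zz nofix] intro!: ext)
  have "Imap z \<in> IZ"
    unfolding IZ_def SZ_def using inv finK suppy o_bij[OF inv inv] by auto
  moreover have "Fmap (Imap z) = z"
    unfolding Fmap_def
  proof (rule the_equality)
    obtain L where L: "\<forall>i\<in>?K. L < i" using lb[OF finK] by blast
    define m where "m = 2 * (L div 2)"
    have m: "even m" "\<forall>i\<in>?K. m < i" using L unfolding m_def by auto
    obtain phi :: "int \<Rightarrow> int" where phi: "strict_mono phi" "bij_betw phi UNIV (- ?K)" "phi 0 = m"
      using phi_exists[OF finK m(2)] by blast
    have comp: "z \<circ> phi = phi \<circ> Theta"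
      using key[OF zz nofix P(3) m(1) _ phi] m(2) by (auto intro!: ext)
    then show "z \<in> FZ \<and> (\<forall>i\<in>supp (Imap z). z i = Imap z i) \<and>
       (\<exists>m phi. even m \<and> (\<forall>i\<in>supp (Imap z). m < i) \<and> strict_mono phi \<and>
         bij_betw phi UNIV (- supp (Imap z)) \<and> phi 0 = m \<and> z \<circ> phi = phi \<circ> Theta)"
      unfolding suppy
    proof (intro conjI exI[of _ m] exI[of _ phi])
      show "\<forall>i\<in>?K. z i = Imap z i" using yeq by simp
    qed (use zF m phi comp in auto)
  next
    fix z' assume H: "z' \<in> FZ \<and> (\<forall>i\<in>supp (Imap z). z' i = Imap z i) \<and>
       (\<exists>m phi. even m \<and> (\<forall>i\<in>supp (Imap z). m < i) \<and> strict_mono phi \<and>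
         bij_betw phi UNIV (- supp (Imap z)) \<and> phi 0 = m \<and> z' \<circ> phi = phi \<circ> Theta)"
    then obtain m and phi :: "int \<Rightarrow> int" where mp: "even m" "\<forall>i\<in>?K. m < i" "strict_mono phi"
       "bij_betw phi UNIV (- ?K)" "phi 0 = m" "z' \<circ> phi = phi \<circ> Theta"
      using suppy by auto
    have agree: "\<And>i. kept z i \<Longrightarrow> z' i = z i" using H suppy yeq by auto
    show "z' = z"
    proof
      fix i show "z' i = z i"
      proof (cases "kept z i")
        case True then show ?thesis using agree by simp
      next
        case False
        then obtain t where t: "phi t = i" using mp(4) unfolding bij_betw_def
          by (metis ComplI UNIV_I imageE mem_Collect_eq)
        have "z' (phi t) = phi (Theta t)" using mp(6) by (metis comp_apply)
        also have "\<dots> = z (phi t)"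
          using key[OF zz nofix P(3) mp(1) _ mp(3) mp(4) mp(5)] mp(2) by auto
        finally show ?thesis using t by simp
      qed
    qed
  qed
  ultimately show "Imap z \<in> IZ \<and> Fmap (Imap z) = z" by simp
qed

end
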